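(* For every $\mathsf{C\text{-}RASP}_+$ program of size $n$, depth $d$, precision $p$ and girth $g$, there is an equivalent decomposed $\mathsf{C\text{-}RASP}_+$ program of size $O(n\,2^{\mathrm{poly}(p,g,d)})$, depth $O(d)$ and precision $O(p)$.
   Context: $\mathsf{C\text{-}RASP}_+$ formulas over a finite alphabet $\Sigma$: $\phi ::= \sigma \mid \neg\phi \mid \phi_1\wedge\phi_2 \mid \sum_{t\in\mathcal T}\alpha_t t\sim k$, terms $t ::= \#[\phi] \mid c$, with $\sigma\in\Sigma$, $\alpha_t,k,c\in\mathbb{N}$, ${\sim}\in\{\ge,>,=,<,\le\}$. Semantics at position $i$ of $w$: $w,i\models\sigma$ iff $w_i=\sigma$; Boolean connectives as usual; $\#[\phi]$ evaluates to $|\{j\in[1,i]: w,j\models\phi\}|$, $c$ to $c$, and comparisons are integer comparisons; $w\models\phi$ iff $w,|w|\models\phi$. Two programs are equivalent if they define the same language. Programs are straight-line (DAG) representations $(\phi_1,\dots,\phi_m)$ where $\phi_i$ may refer to earlier $\phi_j$; size is the total number of symbols with constants in binary and each reference counted as 1. Depth: $\mathrm{dp}(\sigma)=\mathrm{dp}(c)=0$, $\mathrm{dp}(\neg\phi)=\mathrm{dp}(\phi)$, $\mathrm{dp}(\phi_1\wedge\phi_2)=\max(\mathrm{dp}(\phi_1),\mathrm{dp}(\phi_2))$, $\mathrm{dp}(\#[\phi])=\mathrm{dp}(\phi)+1$, and the depth of a comparison is the maximal depth of its terms; the depth of a program is the maximum depth of its lines. The precision of a program is the number of bits needed to encode its largest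 constant; its girth is the maximum number of summands in any sum occurring in it. A program is decomposed if every counting formula in it has the form $\#[\phi]\ge c$ with $\phi$ decomposed and $c\in\mathbb N$. *)

theory Defs
  imports Main
begin

datatype cmp = Ge | Gt | Eq | Lt | Le

text \<open>Formulas over letters of type 'a. \<open>Ref j\<close> refers to line \<open>j\<close> (0-based) of the program.
  A comparison \<open>Cmp ts c k\<close> is \<open>\<Sum>(\<alpha>,t)\<in>ts. \<alpha> t  c  k\<close>; a term is \<open>#[\<phi>]\<close> or a constant.\<close>
datatype 'a form =
    Letter 'a
  | Neg "'a form"
  | And "'a form" "'a form"
  | Cmp "(nat \<times> 'a tm) list" cmp nat
  | Ref nat
and 'a tm = Count "'a form" | Const nat

fun cmp_sem :: "cmp \<Rightarrow> nat \<Rightarrow> nat \<Rightarrow> bool" where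
  "cmp_sem Ge x k = (x \<ge> k)"
| "cmp_sem Gt x k = (x > k)"
| "cmp_sem Eq x k = (x = k)"
| "cmp_sem Lt x k = (x < k)"
| "cmp_sem Le x k = (x \<le> k)"

text \<open>\<open>holds P w i \<phi>\<close>: \<open>w, i \<Turnstile> \<phi>\<close> where references are resolved in the lines \<open>P\<close>
  preceding \<phi>. Positions are 1-based: \<open>w\<^sub>i = w ! (i - 1)\<close>.\<close>
function holds :: "'a form list \<Rightarrow> 'a list \<Rightarrow> nat \<Rightarrow> 'a form \<Rightarrow> bool" where
  "holds P w i (Letter a) = (1 \<le> i \<and> i \<le> length w \<and> w ! (i - 1) = a)"
| "holds P w i (Neg \<phi>) = (\<not> holds P w i \<phi>)"
| "holds P w i (And \<phi> \<psi>) = (holds P w i \<phi> \<and> holds P w i \<psi>)"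
| "holds P w i (Cmp ts c k) =
     cmp_sem c (sum_list (map (\<lambda>(\<alpha>, t). \<alpha> * (case t of Const m \<Rightarrow> m
        | Count \<phi> \<Rightarrow> length (filter (\<lambda>j. holds P w j \<phi>) [1..<Suc i]))) ts)) k"
| "holds P w i (Ref j) = (if j < length P then holds (take j P) w i (P ! j) else False)"
  by pat_completeness auto
lemma size_Count_lt:
  assumes "(a, Count x1) \<in> set ts"
  shows "size x1 < Suc (size_list (size_prod (\<lambda>x. 0) size) ts)"
proof -
  have "Suc (size x1) \<le> size_prod (\<lambda>x. 0) size (a, Count x1)" by simp
  also have "\<dots> \<le> size_list (size_prod (\<lambda>x. 0) size) ts"
    using assms by (rule size_list_estimation') simp
  finally show ?thesis by simp
qed

termination
  apply (relation "measures [\<lambda>(P, w, i, \<phi>). length P, \<lambda>(P, w, i, \<phi>). size \<phi>]")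
  apply (auto intro: size_Count_lt)
  done


definition lang :: "'a set \<Rightarrow> 'a form list \<Rightarrow> 'a list set" where
  "lang \<Sigma> P = {w \<in> lists \<Sigma>. holds (butlast P) w (length w) (last P)}"

fun frefs :: "'a form \<Rightarrow> nat set" where
  "frefs (Letter a) = {}"
| "frefs (Neg \<phi>) = frefs \<phi>"
| "frefs (And \<phi> \<psi>) = frefs \<phi> \<union> frefs \<psi>"
| "frefs (Cmp ts c k) = (\<Union>(\<alpha>, t) \<in> set ts. case t of Const m \<Rightarrow> {} | Count \<phi> \<Rightarrow> frefs \<phi>)"
| "frefs (Ref j) = {j}"

fun fletters :: "'a form \<Rightarrow> 'a set" where
  "fletters (Letter a) = {a}"
| "fletters (Neg \<phi>) = fletters \<phi>"
| "fletters (And \<phi> \<psi>) = fletters \<phi> \<union> fletters \<psi>"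
| "fletters (Cmp ts c k) = (\<Union>(\<alpha>, t) \<in> set ts. case t of Const m \<Rightarrow> {} | Count \<phi> \<Rightarrow> fletters \<phi>)"
| "fletters (Ref j) = {}"

definition program :: "'a set \<Rightarrow> 'a form list \<Rightarrow> bool" where
  "program \<Sigma> P \<longleftrightarrow> P \<noteq> [] \<and>
     (\<forall>i < length P. (\<forall>j \<in> frefs (P ! i). j < i) \<and> fletters (P ! i) \<subseteq> \<Sigma>)"

text \<open>Number of bits of a natural number (binary encoding; 0 takes one bit).\<close>
fun bitlen :: "nat \<Rightarrow> nat" where
  "bitlen n = (if n < 2 then 1 else Suc (bitlen (n div 2)))"

text \<open>Number of symbols; constants count with their binary length, a reference counts 1.
  A comparison counts one symbol for the relation, one per summand (operator), plus the
  sizes of coefficients, terms and the bound.\<close>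
fun fsize :: "'a form \<Rightarrow> nat" where
  "fsize (Letter a) = 1"
| "fsize (Neg \<phi>) = Suc (fsize \<phi>)"
| "fsize (And \<phi> \<psi>) = Suc (fsize \<phi> + fsize \<psi>)"
| "fsize (Cmp ts c k) = Suc (bitlen k + sum_list (map (\<lambda>(\<alpha>, t). Suc (bitlen \<alpha> +
      (case t of Const m \<Rightarrow> bitlen m | Count \<phi> \<Rightarrow> Suc (fsize \<phi>)))) ts))"
| "fsize (Ref j) = 1"

definition psize :: "'a form list \<Rightarrow> nat" where
  "psize P = sum_list (map fsize P)"

function dp :: "'a form list \<Rightarrow> 'a form \<Rightarrow> nat" where
  "dp P (Letter a) = 0"
| "dp P (Neg \<phi>) = dp P \<phi>"
| "dp P (And \<phi> \<psi>) = max (dp P \<phi>) (dp P \<psi>)"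
| "dp P (Cmp ts c k) = fold max (map (\<lambda>(\<alpha>, t). case t of Const m \<Rightarrow> 0
      | Count \<phi> \<Rightarrow> Suc (dp P \<phi>)) ts) 0"
| "dp P (Ref j) = (if j < length P then dp (take j P) (P ! j) else 0)"
  by pat_completeness auto
termination
  apply (relation "measures [\<lambda>(P, \<phi>). length P, \<lambda>(P, \<phi>). size \<phi>]")
  apply (auto intro: size_Count_lt)
  done

definition depth :: "'a form list \<Rightarrow> nat" where
  "depth P = Max (set (0 # map (\<lambda>i. dp (take i P) (P ! i)) [0..<length P]))"

fun fconsts :: "'a form \<Rightarrow> nat list" where
  "fconsts (Letter a) = []"
| "fconsts (Neg \<phi>) = fconsts \<phi>"
| "fconsts (And \<phi> \<psi>) = fconsts \<phi> @ fconsts \<psi>"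
| "fconsts (Cmp ts c k) = k # concat (map (\<lambda>(\<alpha>, t). \<alpha> #
      (case t of Const m \<Rightarrow> [m] | Count \<phi> \<Rightarrow> fconsts \<phi>)) ts)"
| "fconsts (Ref j) = []"

definition precision :: "'a form list \<Rightarrow> nat" where
  "precision P = bitlen (Max (set (0 # concat (map fconsts P))))"

fun fgirth :: "'a form \<Rightarrow> nat" where
  "fgirth (Letter a) = 0"
| "fgirth (Neg \<phi>) = fgirth \<phi>"
| "fgirth (And \<phi> \<psi>) = max (fgirth \<phi>) (fgirth \<psi>)"
| "fgirth (Cmp ts c k) = fold max (map (\<lambda>(\<alpha>, t). case t of Const m \<Rightarrow> 0
      | Count \<phi> \<Rightarrow> fgirth \<phi>) ts) (length ts)"
| "fgirth (Ref j) = 0"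

definition girth :: "'a form list \<Rightarrow> nat" where
  "girth P = Max (set (0 # map fgirth P))"

fun fdecomposed :: "'a form \<Rightarrow> bool" where
  "fdecomposed (Letter a) = True"
| "fdecomposed (Neg \<phi>) = fdecomposed \<phi>"
| "fdecomposed (And \<phi> \<psi>) = (fdecomposed \<phi> \<and> fdecomposed \<psi>)"
| "fdecomposed (Cmp ts c k) = (c = Ge \<and> (case ts of
      [(\<alpha>, Count \<phi>)] \<Rightarrow> \<alpha> = 1 \<and> fdecomposed \<phi> | _ \<Rightarrow> False))"
| "fdecomposed (Ref j) = True"

definition decomposed :: "'a form list \<Rightarrow> bool" where
  "decomposed P \<longleftrightarrow> (\<forall>\<phi> \<in> set P. fdecomposed \<phi>)"

end

theory Submission
  imports Defs
begin

declare bitlen.simps[simp del]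

definition FF :: "'a \<Rightarrow> 'a form" where "FF a = And (Letter a) (Neg (Letter a))"
definition TT :: "'a \<Rightarrow> 'a form" where "TT a = Neg (FF a)"
definition Or :: "'a form \<Rightarrow> 'a form \<Rightarrow> 'a form" where "Or x y = Neg (And (Neg x) (Neg y))"

fun disj :: "'a \<Rightarrow> 'a form list \<Rightarrow> 'a form" where
  "disj a [] = FF a"
| "disj a (x # xs) = Or x (disj a xs)"

fun ge :: "'a \<Rightarrow> (nat \<times> 'a form) list \<Rightarrow> nat \<Rightarrow> 'a form" where
  "ge a [] T = (if T = 0 then TT a else FF a)"
| "ge a ((al, psi) # l) T = disj a (map (\<lambda>c. And (Cmp [(1, Count psi)] Ge c) (ge a l (T - al * c))) [0..<Suc T])"

definition thr :: "'a \<Rightarrow> cmp \<Rightarrow> nat \<Rightarrow> nat \<Rightarrow> (nat \<times> 'a form) list \<Rightarrow> 'a form" where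
  "thr a c k S cs = (case c of Ge \<Rightarrow> ge a cs (k - S) | Gt \<Rightarrow> ge a cs (Suc k - S)
     | Eq \<Rightarrow> And (ge a cs (k - S)) (Neg (ge a cs (Suc k - S)))
     | Lt \<Rightarrow> Neg (ge a cs (k - S)) | Le \<Rightarrow> Neg (ge a cs (Suc k - S)))"

fun cnts :: "(nat \<times> 'a tm) list \<Rightarrow> (nat \<times> 'a form) list" where
  "cnts [] = []"
| "cnts ((al, Count \<phi>) # ts) = (al, \<phi>) # cnts ts"
| "cnts ((al, Const m) # ts) = cnts ts"

fun csum :: "(nat \<times> 'a tm) list \<Rightarrow> nat" where
  "csum [] = 0"
| "csum ((al, Count \<phi>) # ts) = csum ts"
| "csum ((al, Const m) # ts) = al * m + csum ts"

lemma cnts_mem: "x \<in> set (cnts ts) \<Longrightarrow> (fst x, Count (snd x)) \<in> set ts"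
  by (induction ts rule: cnts.induct) auto

lemma cnts_size: "x \<in> set (cnts ts) \<Longrightarrow> size (snd x) < Suc (size_list (size_prod (\<lambda>x. 0) size) ts)"
  by (rule size_Count_lt[OF cnts_mem])

function tr :: "'a \<Rightarrow> 'a form \<Rightarrow> 'a form" where
  "tr a (Letter b) = Letter b"
| "tr a (Neg \<phi>) = Neg (tr a \<phi>)"
| "tr a (And \<phi> \<psi>) = And (tr a \<phi>) (tr a \<psi>)"
| "tr a (Cmp ts c k) = thr a c k (csum ts) (map (\<lambda>x. (fst x, tr a (snd x))) (cnts ts))"
| "tr a (Ref j) = Ref j"
  by pat_completeness auto
termination
  apply (relation "measure (\<lambda>(a, \<phi>). size \<phi>)")
  apply (auto intro: cnts_size)
  done

definition cnt :: "'a form list \<Rightarrow> 'a list \<Rightarrow> nat \<Rightarrow> 'a form \<Rightarrow> nat" where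
  "cnt Q w i \<psi> = length (filter (\<lambda>j. holds Q w j \<psi>) [1..<Suc i])"

lemma holds_Cmp_cnt[simp]: "holds P w i (Cmp ts c k) =
     cmp_sem c (sum_list (map (\<lambda>(\<alpha>, t). \<alpha> * (case t of Const m \<Rightarrow> m
        | Count \<phi> \<Rightarrow> cnt P w i \<phi>)) ts)) k"
  unfolding cnt_def holds.simps(4) ..

declare holds.simps(4)[simp del]

lemma holds_FF[simp]: "\<not> holds Q w i (FF a)" by (simp add: FF_def)
lemma holds_TT[simp]: "holds Q w i (TT a)" by (simp add: TT_def)
lemma holds_Or[simp]: "holds Q w i (Or x y) = (holds Q w i x \<or> holds Q w i y)" by (simp add: Or_def)

lemma holds_disj: "holds Q w i (disj a xs) \<longleftrightarrow> (\<exists>x\<in>set xs. holds Q w i x)"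
  by (induction xs) auto

lemma holds_ge: "holds Q w i (ge a l T) \<longleftrightarrow> T \<le> sum_list (map (\<lambda>(al, \<psi>). al * cnt Q w i \<psi>) l)"
proof (induction l arbitrary: T)
  case Nil
  then show ?case by simp
next
  case (Cons p l)
  obtain al \<psi> where p: "p = (al, \<psi>)" by (cases p)
  define x where "x = cnt Q w i \<psi>"
  define R where "R = sum_list (map (\<lambda>(al, \<psi>). al * cnt Q w i \<psi>) l)"
  have "holds Q w i (ge a (p # l) T) \<longleftrightarrow> (\<exists>c\<in>set [0..<Suc T]. c \<le> x \<and> T - al * c \<le> R)"
  proof -
    have g: "ge a (p # l) T = disj a (map (\<lambda>c. And (Cmp [(1, Count \<psi>)] Ge c) (ge a l (T - al * c))) [0..<Suc T])"
      by (simp only: p ge.simps)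
    have e: "holds Q w i (And (Cmp [(1, Count \<psi>)] Ge c) (ge a l (T - al * c))) \<longleftrightarrow> c \<le> x \<and> T - al * c \<le> R" for c
      unfolding x_def R_def holds.simps(3) holds_Cmp_cnt Cons.IH by simp
    show ?thesis unfolding g holds_disj set_map using e by blast
  qed
  also have "\<dots> \<longleftrightarrow> (\<exists>c\<le>T. c \<le> x \<and> T - al * c \<le> R)"
  proof
    assume "\<exists>c\<in>set [0..<Suc T]. c \<le> x \<and> T - al * c \<le> R"
    then obtain c where c: "c \<in> set [0..<Suc T]" "c \<le> x" "T - al * c \<le> R" by blast
    from c(1) have "c \<le> T" by (simp only: set_upt atLeastLessThan_iff less_Suc_eq_le)
    then show "\<exists>c\<le>T. c \<le> x \<and> T - al * c \<le> R" using c(2,3) by blast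
  next
    assume "\<exists>c\<le>T. c \<le> x \<and> T - al * c \<le> R"
    then obtain c where "c \<le> T" "c \<le> x" "T - al * c \<le> R" by auto
    moreover from \<open>c \<le> T\<close> have "c \<in> set [0..<Suc T]" by (simp only: set_upt atLeastLessThan_iff less_Suc_eq_le) simp
    ultimately show "\<exists>c\<in>set [0..<Suc T]. c \<le> x \<and> T - al * c \<le> R" by blast
  qed
  also have "\<dots> \<longleftrightarrow> T \<le> al * x + R"
  proof
    assume "\<exists>c\<le>T. c \<le> x \<and> T - al * c \<le> R"
    then obtain c where "c \<le> x" "T - al * c \<le> R" by blast
    moreover have "al * c \<le> al * x" using \<open>c \<le> x\<close> by simp
    ultimately show "T \<le> al * x + R" by linarith
  next
    assume h: "T \<le> al * x + R"
    show "\<exists>c\<le>T. c \<le> x \<and> T - al * c \<le> R"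
    proof (cases "x \<le> T")
      case True
      then show ?thesis using h by (intro exI[of _ x]) auto
    next
      case False
      show ?thesis
      proof (cases "al = 0")
        case True
        then show ?thesis using h by (intro exI[of _ 0]) auto
      next
        case False
        then have "T \<le> al * T" by simp
        then show ?thesis using \<open>\<not> x \<le> T\<close> by (intro exI[of _ T]) auto
      qed
    qed
  qed
  finally have fin: "holds Q w i (ge a (p # l) T) \<longleftrightarrow> T \<le> al * x + R" .
  have "sum_list (map (\<lambda>(al, \<psi>). al * cnt Q w i \<psi>) (p # l)) = al * x + R"
    by (simp add: p x_def R_def)
  then show ?case by (simp only: fin)
qed

lemma holds_thr: "holds Q w i (thr a c k S cs) \<longleftrightarrow>
   cmp_sem c (sum_list (map (\<lambda>(al, \<psi>). al * cnt Q w i \<psi>) cs) + S) k"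
  by (cases c) (auto simp: thr_def holds_ge)

lemma sum_split: "sum_list (map (\<lambda>(al, t). al * (case t of Const m \<Rightarrow> m | Count \<phi> \<Rightarrow> f \<phi>)) ts)
   = sum_list (map (\<lambda>(al, \<phi>). al * f \<phi>) (cnts ts)) + csum ts"
  by (induction ts rule: cnts.induct) auto

lemma holds_tr: "holds (map (tr a) P) w i (tr a \<phi>) = holds P w i \<phi>"
proof (induction P w i \<phi> rule: holds.induct)
  case (4 P w i ts c k)
  have e: "cnt (map (tr a) P) w i (tr a (snd x)) = cnt P w i (snd x)" if "x \<in> set (cnts ts)" for x
    unfolding cnt_def
  proof (rule arg_cong[where f=length], rule filter_cong[OF refl])
    fix j assume "j \<in> set [1..<Suc i]"
    then show "holds (map (tr a) P) w j (tr a (snd x)) = holds P w j (snd x)"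
      using 4(1)[OF cnts_mem[OF that] refl refl] by (auto simp del: upt_Suc)
  qed
  have m: "map (\<lambda>(al, \<psi>). al * cnt (map (tr a) P) w i \<psi>) (map (\<lambda>x. (fst x, tr a (snd x))) (cnts ts))
     = map (\<lambda>(al, \<psi>). al * cnt P w i \<psi>) (cnts ts)"
    unfolding map_map o_def
  proof (rule map_cong[OF refl])
    fix x assume x: "x \<in> set (cnts ts)"
    show "(case (fst x, tr a (snd x)) of (al, \<psi>) \<Rightarrow> al * cnt (map (tr a) P) w i \<psi>) =
          (case x of (al, \<psi>) \<Rightarrow> al * cnt P w i \<psi>)"
      using e[OF x] by (simp add: case_prod_beta)
  qed
  have L: "holds (map (tr a) P) w i (tr a (Cmp ts c k)) \<longleftrightarrow> cmp_sem c (sum_list (map (\<lambda>(al, \<psi>). al * cnt (map (tr a) P) w i \<psi>) (map (\<lambda>x. (fst x, tr a (snd x))) (cnts ts))) + csum ts) k"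
    by (simp only: tr.simps holds_thr)
  have R: "holds P w i (Cmp ts c k) \<longleftrightarrow> cmp_sem c (sum_list (map (\<lambda>(al, \<phi>). al * cnt P w i \<phi>) (cnts ts)) + csum ts) k"
    by (simp only: holds_Cmp_cnt sum_split)
  show ?case unfolding L R m ..
next
  case (5 P w i j)
  then show ?case by (simp add: take_map)
qed auto


lemma frefs_disj: "frefs (disj a xs) \<subseteq> (\<Union>x\<in>set xs. frefs x)"
  by (induction xs) (auto simp: FF_def Or_def)

lemma frefs_ge: "frefs (ge a l T) \<subseteq> (\<Union>p\<in>set l. frefs (snd p))"
proof (induction l arbitrary: T)
  case Nil
  then show ?case by (simp add: FF_def TT_def)
next
  case (Cons p l)
  obtain al \<psi> where p: "p = (al, \<psi>)" by (cases p)
  show ?case unfolding p ge.simps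
    by (rule subset_trans[OF frefs_disj]) (use Cons.IH in fastforce)
qed

lemma frefs_thr: "frefs (thr a c k S cs) \<subseteq> (\<Union>p\<in>set cs. frefs (snd p))"
  using frefs_ge[of a cs "k - S"] frefs_ge[of a cs "Suc k - S"] by (cases c) (auto simp: thr_def)

lemma frefs_Cmp_ge: "(al, Count \<phi>) \<in> set ts \<Longrightarrow> frefs \<phi> \<subseteq> frefs (Cmp ts c k)"
proof
  fix x assume "(al, Count \<phi>) \<in> set ts" "x \<in> frefs \<phi>"
  then show "x \<in> frefs (Cmp ts c k)" by (simp only: frefs.simps) (rule UN_I, assumption, simp)
qed

lemma fletters_Cmp_ge: "(al, Count \<phi>) \<in> set ts \<Longrightarrow> fletters \<phi> \<subseteq> fletters (Cmp ts c k)"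
proof
  fix x assume "(al, Count \<phi>) \<in> set ts" "x \<in> fletters \<phi>"
  then show "x \<in> fletters (Cmp ts c k)" by (simp only: fletters.simps) (rule UN_I, assumption, simp)
qed

lemma frefs_tr: "frefs (tr a \<phi>) \<subseteq> frefs \<phi>"
proof (induction a \<phi> rule: tr.induct)
  case (4 a ts c k)
  have "frefs (tr a (Cmp ts c k)) \<subseteq> (\<Union>p\<in>set (cnts ts). frefs (tr a (snd p)))"
    using frefs_thr by fastforce
  also have "\<dots> \<subseteq> (\<Union>p\<in>set (cnts ts). frefs (snd p))" using 4 by blast
  also have "\<dots> \<subseteq> frefs (Cmp ts c k)" using frefs_Cmp_ge[OF cnts_mem] by blast
  finally show ?case .
qed auto

lemma fletters_disj: "fletters (disj a xs) \<subseteq> {a} \<union> (\<Union>x\<in>set xs. fletters x)"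
  by (induction xs) (auto simp: FF_def Or_def)

lemma fletters_ge: "fletters (ge a l T) \<subseteq> {a} \<union> (\<Union>p\<in>set l. fletters (snd p))"
proof (induction l arbitrary: T)
  case Nil
  then show ?case by (simp add: FF_def TT_def)
next
  case (Cons p l)
  obtain al \<psi> where p: "p = (al, \<psi>)" by (cases p)
  show ?case unfolding p ge.simps
    by (rule subset_trans[OF fletters_disj]) (use Cons.IH in fastforce)
qed

lemma fletters_thr: "fletters (thr a c k S cs) \<subseteq> {a} \<union> (\<Union>p\<in>set cs. fletters (snd p))"
  using fletters_ge[of a cs "k - S"] fletters_ge[of a cs "Suc k - S"] by (cases c) (auto simp: thr_def)

lemma fletters_tr: "fletters (tr a \<phi>) \<subseteq> {a} \<union> fletters \<phi>"
proof (induction a \<phi> rule: tr.induct)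
  case (4 a ts c k)
  have "fletters (tr a (Cmp ts c k)) \<subseteq> {a} \<union> (\<Union>p\<in>set (cnts ts). fletters (tr a (snd p)))"
    using fletters_thr by fastforce
  also have "\<dots> \<subseteq> {a} \<union> (\<Union>p\<in>set (cnts ts). fletters (snd p))" using 4 by blast
  also have "\<dots> \<subseteq> {a} \<union> fletters (Cmp ts c k)" using fletters_Cmp_ge[OF cnts_mem] by blast
  finally show ?case .
qed auto

lemma fdec_disj: "\<forall>x\<in>set xs. fdecomposed x \<Longrightarrow> fdecomposed (disj a xs)"
  by (induction xs) (auto simp: FF_def Or_def)

lemma fdec_ge: "\<forall>p\<in>set l. fdecomposed (snd p) \<Longrightarrow> fdecomposed (ge a l T)"
proof (induction l arbitrary: T)
  case Nil
  then show ?case by (simp add: FF_def TT_def)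
next
  case (Cons p l)
  obtain al \<psi> where p: "p = (al, \<psi>)" by (cases p)
  show ?case unfolding p ge.simps
    by (rule fdec_disj) (use Cons in \<open>auto simp: p\<close>)
qed

lemma fdec_thr: "\<forall>p\<in>set cs. fdecomposed (snd p) \<Longrightarrow> fdecomposed (thr a c k S cs)"
  by (cases c) (auto simp: thr_def fdec_ge)

lemma fdec_tr: "fdecomposed (tr a \<phi>)"
proof (induction a \<phi> rule: tr.induct)
  case (4 a ts c k)
  then show ?case by (auto intro!: fdec_thr)
qed auto

definition cb :: "nat \<Rightarrow> 'a form \<Rightarrow> bool" where
  "cb M \<phi> \<longleftrightarrow> (\<forall>x\<in>set (fconsts \<phi>). x \<le> M)"

lemma cb_disj: "\<forall>x\<in>set xs. cb M x \<Longrightarrow> cb M (disj a xs)"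
  by (induction xs) (auto simp: FF_def Or_def cb_def)

lemma cb_And[simp]: "cb M (And x y) \<longleftrightarrow> cb M x \<and> cb M y" by (auto simp: cb_def)
lemma cb_Neg[simp]: "cb M (Neg x) \<longleftrightarrow> cb M x" by (auto simp: cb_def)
lemma cb_Cmp1: "cb M (Cmp [(1, Count \<psi>)] Ge c) \<longleftrightarrow> c \<le> M \<and> 1 \<le> M \<and> cb M \<psi>"
  by (auto simp: cb_def)

lemma cb_ge: "\<forall>p\<in>set l. cb M (snd p) \<Longrightarrow> 1 \<le> M \<Longrightarrow> T \<le> M \<Longrightarrow> cb M (ge a l T)"
proof (induction l arbitrary: T)
  case Nil
  then show ?case by (simp add: FF_def TT_def cb_def)
next
  case (Cons p l)
  obtain al \<psi> where p: "p = (al, \<psi>)" by (cases p)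
  have IH: "cb M (ge a l (T - al * c))" for c
    by (rule Cons.IH) (use Cons.prems in auto)
  have psi: "cb M \<psi>" using Cons.prems(1) p by auto
  show ?case unfolding p ge.simps
  proof (rule cb_disj, rule ballI)
    fix y assume "y \<in> set (map (\<lambda>c. And (Cmp [(1, Count \<psi>)] Ge c) (ge a l (T - al * c))) [0..<Suc T])"
    then obtain c where c: "c \<in> set [0..<Suc T]" and y: "y = And (Cmp [(1, Count \<psi>)] Ge c) (ge a l (T - al * c))"
      unfolding set_map by blast
    from c have "c \<le> T" by (simp only: set_upt atLeastLessThan_iff less_Suc_eq_le)
    then show "cb M y" unfolding y cb_And cb_Cmp1 using IH psi Cons.prems by auto
  qed
qed

lemma cb_thr: "\<forall>p\<in>set cs. cb M (snd p) \<Longrightarrow> Suc k \<le> M \<Longrightarrow> cb M (thr a c k S cs)"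
proof -
  assume h: "\<forall>p\<in>set cs. cb M (snd p)" "Suc k \<le> M"
  have "cb M (ge a cs (k - S))" "cb M (ge a cs (Suc k - S))" by (rule cb_ge; use h in auto)+
  then show ?thesis by (cases c) (simp_all add: thr_def)
qed

lemma cb_tr: "cb B \<phi> \<Longrightarrow> cb (Suc B) (tr a \<phi>)"
proof (induction a \<phi> rule: tr.induct)
  case (4 a ts c k)
  have "\<forall>p\<in>set (map (\<lambda>x. (fst x, tr a (snd x))) (cnts ts)). cb (Suc B) (snd p)"
  proof
    fix p assume "p \<in> set (map (\<lambda>x. (fst x, tr a (snd x))) (cnts ts))"
    then obtain x where x: "x \<in> set (cnts ts)" "p = (fst x, tr a (snd x))" by auto
    have "cb B (snd x)" using 4(2) cnts_mem[OF x(1)] unfolding cb_def by fastforce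
    then show "cb (Suc B) (snd p)" using 4(1)[OF x(1)] x(2) by simp
  qed
  moreover have "k \<le> B" using 4(2) by (simp add: cb_def)
  ultimately show ?case by (simp add: cb_thr)
qed (auto simp: cb_def)

lemma fold_max_eq: "fold max xs (a::nat) = Max (set (a # xs))"
  by (rule Max.set_eq_fold[symmetric])

lemma dp_Cmp_ge: "(al, Count \<phi>) \<in> set ts \<Longrightarrow> Suc (dp P \<phi>) \<le> dp P (Cmp ts c k)"
  unfolding dp.simps fold_max_eq by (rule Max_ge) force+

lemma girth_Cmp_ge: "(al, Count \<phi>) \<in> set ts \<Longrightarrow> fgirth \<phi> \<le> fgirth (Cmp ts c k)"
  unfolding fgirth.simps fold_max_eq by (rule Max_ge) force+

lemma girth_Cmp_len: "length ts \<le> fgirth (Cmp ts c k)"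
  unfolding fgirth.simps fold_max_eq by (rule Max_ge) force+

lemma dp_disj: "\<forall>x\<in>set xs. dp Q x \<le> M \<Longrightarrow> dp Q (disj a xs) \<le> M"
  by (induction xs) (auto simp: FF_def Or_def)

lemma dp_ge: "\<forall>p\<in>set l. Suc (dp Q (snd p)) \<le> M \<Longrightarrow> dp Q (ge a l T) \<le> M"
proof (induction l arbitrary: T)
  case Nil
  then show ?case by (simp add: FF_def TT_def)
next
  case (Cons p l)
  obtain al \<psi> where p: "p = (al, \<psi>)" by (cases p)
  have "dp Q (ge a l (T - al * c)) \<le> M" for c using Cons by auto
  then show ?case unfolding p ge.simps
    by (intro dp_disj) (use Cons in \<open>auto simp: p\<close>)
qed

lemma dp_thr: "\<forall>p\<in>set cs. Suc (dp Q (snd p)) \<le> M \<Longrightarrow> dp Q (thr a c k S cs) \<le> M"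
  by (cases c) (auto simp: thr_def dp_ge)

lemma dp_tr: "dp (map (tr a) P) (tr a \<phi>) \<le> dp P \<phi>"
proof (induction P \<phi> rule: dp.induct)
  case (4 P ts c k)
  show ?case unfolding tr.simps
  proof (rule dp_thr, rule ballI)
    fix p assume "p \<in> set (map (\<lambda>x. (fst x, tr a (snd x))) (cnts ts))"
    then obtain x where x: "x \<in> set (cnts ts)" "p = (fst x, tr a (snd x))" by auto
    have "dp (map (tr a) P) (tr a (snd x)) \<le> dp P (snd x)"
      using 4[OF cnts_mem[OF x(1)] refl refl] .
    moreover have "Suc (dp P (snd x)) \<le> dp P (Cmp ts c k)"
      by (rule dp_Cmp_ge[OF cnts_mem[OF x(1)]])
    ultimately show "Suc (dp (map (tr a) P) (snd p)) \<le> dp P (Cmp ts c k)" using x(2) by simp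
  qed
next
  case (5 P j)
  then show ?case by (simp add: take_map)
qed (auto simp: max.coboundedI1 max.coboundedI2 le_max_iff_disj)


subsection \<open>Bit lengths\<close>

lemma bitlen_1[simp]: "bitlen (Suc 0) = 1" by (simp add: bitlen.simps)

lemma bitlen_le_Suc: "bitlen n \<le> Suc n"
proof (induction n rule: bitlen.induct)
  case (1 n)
  show ?case
  proof (cases "n < 2")
    case True
    then show ?thesis by (simp add: bitlen.simps)
  next
    case False
    then have "bitlen n = Suc (bitlen (n div 2))" by (simp add: bitlen.simps)
    moreover have "bitlen (n div 2) \<le> Suc (n div 2)" using 1 False by simp
    moreover have "Suc (n div 2) \<le> n" using False by simp
    ultimately show ?thesis by simp
  qed
qed

lemma bitlen_gt: "n < 2 ^ bitlen n"
proof (induction n rule: bitlen.induct)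
  case (1 n)
  show ?case
  proof (cases "n < 2")
    case True
    then show ?thesis by (simp add: bitlen.simps)
  next
    case False
    then have "bitlen n = Suc (bitlen (n div 2))" by (simp add: bitlen.simps)
    moreover have "n div 2 < 2 ^ bitlen (n div 2)" using 1 False by simp
    ultimately show ?thesis by simp
  qed
qed

lemma bitlen_le: "n < 2 ^ k \<Longrightarrow> 1 \<le> k \<Longrightarrow> bitlen n \<le> k"
proof (induction n arbitrary: k rule: bitlen.induct)
  case (1 n)
  show ?case
  proof (cases "n < 2")
    case True
    then show ?thesis using 1 by (simp add: bitlen.simps)
  next
    case False
    then have b: "bitlen n = Suc (bitlen (n div 2))" by (simp add: bitlen.simps)
    have "k \<noteq> 1" using False 1(2) by auto
    then obtain k' where k: "k = Suc k'" "1 \<le> k'" using 1(3) by (cases k) auto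
    have "n div 2 < 2 ^ k'" using 1(2) k by simp
    then have "bitlen (n div 2) \<le> k'" using 1(1) False k by simp
    then show ?thesis using b k by simp
  qed
qed

lemma bitlen_ge1: "1 \<le> bitlen n"
  by (simp add: bitlen.simps)

subsection \<open>Sizes\<close>

lemma fsize_FF[simp]: "fsize (FF a) = 4" by (simp add: FF_def)
lemma fsize_TT[simp]: "fsize (TT a) = 5" by (simp add: TT_def)
lemma fsize_Or[simp]: "fsize (Or x y) = 4 + fsize x + fsize y" by (simp add: Or_def)

lemma fsize_disj: "fsize (disj a xs) = 4 + sum_list (map (\<lambda>x. 4 + fsize x) xs)"
  by (induction xs) auto

lemma fsize_Cmp1: "fsize (Cmp [(1, Count \<psi>)] Ge c) = 4 + bitlen c + fsize \<psi>"
  by simp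

lemma sum_list_le: "(\<And>x. x \<in> set xs \<Longrightarrow> f x \<le> M) \<Longrightarrow> sum_list (map f xs) \<le> length xs * (M::nat)"
  by (induction xs) (auto simp: add_mono)

lemma arith_step: fixes K N f S :: nat assumes K: "2 \<le> K" and N: "1 \<le> N"
  shows "4 + K * (9 + K + f + N * (1 + S)) \<le> 32*K*K * N * (1 + f + S)"
proof -
  have h1: "4 \<le> K * K" using mult_le_mono[OF K K] by simp
  have "9 \<le> 5 * K" using K by simp
  then have h2: "9 * K \<le> 5 * (K * K)" using mult_le_mono1[of 9 "5*K" K] by (simp add: algebra_simps)
  have h3: "K * f \<le> K * K * f" using K by simp
  have h4: "K * K * (1 + f) \<le> K * K * N * (1 + f)" using mult_le_mono2[OF N, of "K*K*(1+f)"] by (simp add: algebra_simps)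
  have "K \<le> K * K" using K by simp
  then have h5: "K * N * (1 + S) \<le> K * K * N * (1 + S)" using mult_le_mono1[of K "K*K" "N*(1+S)"] by (simp add: algebra_simps)
  have e: "K * K * (1 + f) = K * K + K * K * f" by (simp add: algebra_simps)
  have "4 + K * (9 + K + f + N * (1 + S)) = 4 + 9 * K + K * K + K * f + K * N * (1 + S)"
    by (simp add: algebra_simps)
  also have "\<dots> \<le> 7 * (K * K * N * (1 + f)) + K * K * N * (1 + S)"
    using h1 h2 h3 h4 h5 e by linarith
  also have "\<dots> \<le> 32*K*K * N * (1 + f + S)" by (simp add: algebra_simps)
  finally show ?thesis .
qed

lemma fsize_ge: "T < K \<Longrightarrow> 2 \<le> K \<Longrightarrow>
  fsize (ge a l T) \<le> (32*K*K) ^ Suc (length l) * (1 + sum_list (map (\<lambda>p. fsize (snd p)) l))"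
proof (induction l arbitrary: T)
  case Nil
  have "5 \<le> 32 * K * K" using Nil(2) mult_le_mono[OF Nil(2) Nil(2)] by simp
  then show ?case using Nil(2) by simp
next
  case (Cons p l)
  obtain al \<psi> where p: "p = (al, \<psi>)" by (cases p)
  define N where "N = (32*K*K) ^ Suc (length l)"
  define S where "S = sum_list (map (\<lambda>p. fsize (snd p)) l)"
  define f where "f = fsize \<psi>"
  have N1: "1 \<le> N" unfolding N_def using Cons.prems(2) by simp
  have IH: "fsize (ge a l (T - al * c)) \<le> N * (1 + S)" for c
    unfolding N_def S_def by (rule Cons.IH) (use Cons.prems in auto)
  let ?g = "\<lambda>c. And (Cmp [(1, Count \<psi>)] Ge c) (ge a l (T - al * c))"
  have el: "4 + fsize (?g c) \<le> 9 + K + f + N * (1 + S)" if "c \<in> set [0..<Suc T]" for c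
  proof -
    from that have "c \<le> T" by (simp only: set_upt atLeastLessThan_iff less_Suc_eq_le)
    then have "bitlen c \<le> K" using bitlen_le_Suc[of c] Cons.prems(1) by linarith
    then show ?thesis using IH[of c] by (simp add: f_def)
  qed
  have "fsize (ge a (p # l) T) = 4 + sum_list (map (\<lambda>x. 4 + fsize x) (map ?g [0..<Suc T]))"
    by (simp only: p ge.simps fsize_disj)
  also have "\<dots> = 4 + sum_list (map (\<lambda>c. 4 + fsize (?g c)) [0..<Suc T])"
    by (simp only: map_map o_def)
  also have "\<dots> \<le> 4 + length [0..<Suc T] * (9 + K + f + N * (1 + S))"
    using sum_list_le[of "[0..<Suc T]" "\<lambda>c. 4 + fsize (?g c)", OF el] by simp
  also have "\<dots> \<le> 4 + K * (9 + K + f + N * (1 + S))"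
    by (rule add_left_mono, rule mult_le_mono1) (use Cons.prems(1) in simp)
  also have "\<dots> \<le> 32*K*K * N * (1 + f + S)"
    by (rule arith_step[OF Cons.prems(2) N1])
  also have "\<dots> = (32*K*K) ^ Suc (length (p # l)) * (1 + sum_list (map (\<lambda>p. fsize (snd p)) (p # l)))"
    by (simp add: N_def S_def f_def p algebra_simps)
  finally show ?case .
qed

lemma fsize_thr: "fsize (ge a cs (k - S)) \<le> X \<Longrightarrow> fsize (ge a cs (Suc k - S)) \<le> X \<Longrightarrow>
   fsize (thr a c k S cs) \<le> 2 + 2 * X"
  by (cases c) (auto simp: thr_def)


lemma sum_cnts_le: "sum_list (map (\<lambda>p. fsize (snd p)) (cnts ts)) \<le>
   sum_list (map (\<lambda>(\<alpha>, t). Suc (bitlen \<alpha> + (case t of Const m \<Rightarrow> bitlen m | Count \<phi> \<Rightarrow> Suc (fsize \<phi>)))) ts)"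
  by (induction ts rule: cnts.induct) auto

lemma length_cnts: "length (cnts ts) \<le> length ts"
  by (induction ts rule: cnts.induct) auto

lemma cb_Cmp_sub: "cb B (Cmp ts c k) \<Longrightarrow> (al, Count \<phi>) \<in> set ts \<Longrightarrow> cb B \<phi>"
  unfolding cb_def by fastforce

lemma cb_Cmp_k: "cb B (Cmp ts c k) \<Longrightarrow> k \<le> B"
  unfolding cb_def by simp

lemma fsize_tr:
  fixes K g B D :: nat
  assumes K: "2 \<le> K" and BK: "Suc B < K" and D: "D = 4 * (32*K*K) ^ Suc g"
  shows "fgirth \<phi> \<le> g \<Longrightarrow> cb B \<phi> \<Longrightarrow> fsize (tr a \<phi>) \<le> D ^ Suc (dp P \<phi>) * fsize \<phi>"
proof (induction a \<phi> rule: tr.induct)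
  have A1: "1 \<le> 32*K*K" using K by simp
  then have D1: "1 \<le> D" unfolding D by simp
  {
    case (1 a b)
    show ?case using D1 by simp
  next
    case (2 a \<phi>)
    let ?E = "D ^ Suc (dp P \<phi>)"
    have E1: "1 \<le> ?E" using D1 by simp
    have "fsize (tr a (Neg \<phi>)) \<le> 1 + ?E * fsize \<phi>" using 2 by simp
    also have "\<dots> \<le> ?E * fsize (Neg \<phi>)" using E1 by (simp add: algebra_simps)
    finally show ?case by simp
  next
    case (3 a \<phi> \<psi>)
    let ?E = "D ^ Suc (dp P (And \<phi> \<psi>))"
    have E1: "1 \<le> ?E" using D1 by simp
    have e1: "D ^ Suc (dp P \<phi>) \<le> ?E" by (rule power_increasing) (use D1 in auto)
    have e2: "D ^ Suc (dp P \<psi>) \<le> ?E" by (rule power_increasing) (use D1 in auto)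
    have i1: "fsize (tr a \<phi>) \<le> ?E * fsize \<phi>"
      using 3(1) 3(3-4) e1 mult_le_mono1[OF e1, of "fsize \<phi>"] by (auto intro: order_trans)
    have i2: "fsize (tr a \<psi>) \<le> ?E * fsize \<psi>"
      using 3(2) 3(3-4) e2 mult_le_mono1[OF e2, of "fsize \<psi>"] by (auto intro: order_trans)
    have "fsize (tr a (And \<phi> \<psi>)) \<le> 1 + ?E * fsize \<phi> + ?E * fsize \<psi>" using i1 i2 by simp
    also have "\<dots> \<le> ?E * fsize (And \<phi> \<psi>)" using E1 by (simp add: algebra_simps)
    finally show ?case .
  next
    case (4 a ts c k)
    define e where "e = dp P (Cmp ts c k)"
    define cs where "cs = map (\<lambda>x. (fst x, tr a (snd x))) (cnts ts)"
    define A where "A = 32*K*K"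
    define Sc where "Sc = sum_list (map (\<lambda>p. fsize (snd p)) (cnts ts))"
    have De1: "1 \<le> D ^ e" using D1 by simp
    have sub: "fsize (tr a (snd x)) \<le> D ^ e * fsize (snd x)" if x: "x \<in> set (cnts ts)" for x
    proof -
      have m: "(fst x, Count (snd x)) \<in> set ts" by (rule cnts_mem[OF x])
      have "fgirth (snd x) \<le> g" using girth_Cmp_ge[OF m, of c k] 4(2) by simp
      moreover have "cb B (snd x)" using cb_Cmp_sub[OF 4(3) m] .
      ultimately have "fsize (tr a (snd x)) \<le> D ^ Suc (dp P (snd x)) * fsize (snd x)"
        using 4(1)[OF x] by simp
      also have "\<dots> \<le> D ^ e * fsize (snd x)"
        by (rule mult_le_mono1, rule power_increasing) (use D1 dp_Cmp_ge[OF m, of P c k] in \<open>auto simp: e_def\<close>)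
      finally show ?thesis .
    qed
    have Scs: "sum_list (map (\<lambda>p. fsize (snd p)) cs) \<le> D ^ e * Sc"
    proof -
      have "sum_list (map (\<lambda>p. fsize (snd p)) cs) = sum_list (map (\<lambda>x. fsize (tr a (snd x))) (cnts ts))"
        by (simp add: cs_def o_def)
      also have "\<dots> \<le> sum_list (map (\<lambda>x. D ^ e * fsize (snd x)) (cnts ts))"
        by (rule sum_list_mono) (rule sub)
      also have "\<dots> = D ^ e * Sc" by (simp add: Sc_def sum_list_const_mult)
      finally show ?thesis .
    qed
    have lcs: "length cs \<le> g" using length_cnts[of ts] girth_Cmp_len[of ts c k] 4(2) by (simp add: cs_def)
    have kB: "k \<le> B" by (rule cb_Cmp_k[OF 4(3)])
    have X: "fsize (ge a cs T) \<le> A ^ Suc g * D ^ e * (1 + Sc)" if T: "T \<le> Suc k" for T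
    proof -
      have "T < K" using T kB BK by simp
      then have "fsize (ge a cs T) \<le> A ^ Suc (length cs) * (1 + sum_list (map (\<lambda>p. fsize (snd p)) cs))"
        unfolding A_def by (rule fsize_ge[OF _ K])
      also have "\<dots> \<le> A ^ Suc g * (1 + D ^ e * Sc)"
        by (rule mult_le_mono, rule power_increasing) (use lcs A1 Scs in \<open>auto simp: A_def\<close>)
      also have "\<dots> \<le> A ^ Suc g * (D ^ e * (1 + Sc))"
        by (rule mult_le_mono2) (use De1 in \<open>simp add: algebra_simps\<close>)
      finally show ?thesis by (simp add: algebra_simps)
    qed
    have "0 < A ^ Suc g * D ^ e * (1 + Sc)" using A1 De1 D1 unfolding A_def by (simp del: power_Suc)
    then have X1: "1 \<le> A ^ Suc g * D ^ e * (1 + Sc)" by linarith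
    have "fsize (tr a (Cmp ts c k)) \<le> 2 + 2 * (A ^ Suc g * D ^ e * (1 + Sc))"
      unfolding tr.simps cs_def[symmetric] by (rule fsize_thr; rule X; simp)
    also have "\<dots> \<le> 4 * (A ^ Suc g * D ^ e * (1 + Sc))" using X1 by linarith
    also have "\<dots> = D ^ Suc e * (1 + Sc)" by (simp add: D A_def algebra_simps)
    also have "\<dots> \<le> D ^ Suc e * fsize (Cmp ts c k)"
      by (rule mult_le_mono2) (use sum_cnts_le[of ts] in \<open>simp add: Sc_def\<close>)
    finally show ?case by (simp add: e_def)
  next
    case (5 a j)
    show ?case using D1 by simp
  }
qed


lemma exp_bound:
  fixes p g d :: nat
  shows "(2 + (2*p+7)*(g+1))*(d+1) \<le> 20 * (p + g + d + 1) ^ 20"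
proof -
  define s where "s = p + g + d + 1"
  have s1: "1 \<le> s" by (simp add: s_def)
  have a: "2 + (2*p+7)*(g+1) \<le> 2 * s + (9 * s) * s"
  proof -
    have "(2*p+7)*(g+1) \<le> (9*s)*s" by (rule mult_le_mono) (use s1 in \<open>auto simp: s_def\<close>)
    moreover have "2 \<le> 2 * s" using s1 by simp
    ultimately show ?thesis by linarith
  qed
  have b: "2 * s + (9 * s) * s \<le> 11 * s ^ 2"
    using s1 mult_le_mono1[OF s1, of "2*s"] by (simp add: power2_eq_square)
  have "(2 + (2*p+7)*(g+1))*(d+1) \<le> (11 * s ^ 2) * s"
    by (rule mult_le_mono) (use a b in \<open>auto simp: s_def\<close>)
  also have "\<dots> = 11 * s ^ 3" by (simp add: power3_eq_cube power2_eq_square algebra_simps)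
  also have "\<dots> \<le> 20 * s ^ 20"
    by (rule mult_le_mono, simp, rule power_increasing) (use s1 in auto)
  finally show ?thesis by (simp add: s_def)
qed

theorem lemma4p2:
  shows "\<exists>C::nat. \<forall>(\<Sigma>::'a set) P.
     finite \<Sigma> \<and> \<Sigma> \<noteq> {} \<and> program \<Sigma> P \<longrightarrow>
     (\<exists>Q. program \<Sigma> Q \<and> decomposed Q \<and> lang \<Sigma> Q = lang \<Sigma> P
        \<and> psize Q \<le> C * psize P * 2 ^ (C * (precision P + girth P + depth P + 1) ^ C)
        \<and> depth Q \<le> C * (depth P + 1)
        \<and> precision Q \<le> C * precision P)"
proof (intro exI[of _ 20] allI impI)
  fix \<Sigma> :: "'a set" and P
  assume h: "finite \<Sigma> \<and> \<Sigma> \<noteq> {} \<and> program \<Sigma> P"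
  then have ne: "\<Sigma> \<noteq> {}" and prog: "program \<Sigma> P" by auto
  define a0 where "a0 = (SOME a. a \<in> \<Sigma>)"
  have a0: "a0 \<in> \<Sigma>" unfolding a0_def using ne by (simp add: some_in_eq)
  define Q where "Q = map (tr a0) P"
  define B where "B = Max (set (0 # concat (map fconsts P)))"
  define p where "p = precision P"
  define g where "g = girth P"
  define d where "d = depth P"
  define K :: nat where "K = 2 ^ (p + 1)"
  define D :: nat where "D = 4 * (32*K*K) ^ Suc g"
  have Pne: "P \<noteq> []" using prog by (simp add: program_def)
  have pB: "p = bitlen B" by (simp add: p_def B_def precision_def)
  have p1: "1 \<le> p" using bitlen_ge1 pB by simp
  have BK: "Suc B < K"
  proof -
    have "B < 2 ^ p" using bitlen_gt[of B] pB by simp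
    then show ?thesis unfolding K_def by simp
  qed
  have K2: "2 \<le> K" unfolding K_def using one_le_power[of 2 p] by simp
  have "1 \<le> (32*K*K) ^ Suc g" by (rule one_le_power) (use K2 in simp)
  then have D1: "1 \<le> D" by (simp add: D_def del: power_Suc)
  have gi: "fgirth (P ! i) \<le> g" if "i < length P" for i
    unfolding g_def girth_def by (rule Max_ge) (use that in auto)
  have cbi: "cb B (P ! i)" if "i < length P" for i
    unfolding cb_def B_def
  proof
    fix x assume "x \<in> set (fconsts (P ! i))"
    then have "x \<in> set (concat (map fconsts P))" using that by auto
    then show "x \<le> Max (set (0 # concat (map fconsts P)))" by (intro Max_ge) auto
  qed
  have di: "dp (take i P) (P ! i) \<le> d" if "i < length P" for i
    unfolding d_def depth_def by (rule Max_ge) (use that in auto)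
  have Qi: "Q ! i = tr a0 (P ! i)" if "i < length P" for i using that by (simp add: Q_def)
  have lenQ: "length Q = length P" by (simp add: Q_def)
  have progQ: "program \<Sigma> Q"
    unfolding program_def
  proof (intro conjI allI impI)
    show "Q \<noteq> []" using Pne by (simp add: Q_def)
  next
    fix i assume i: "i < length Q"
    then have iP: "i < length P" by (simp add: lenQ)
    have "\<forall>j\<in>frefs (P ! i). j < i" "fletters (P ! i) \<subseteq> \<Sigma>" using prog iP by (auto simp: program_def)
    then show "\<forall>j\<in>frefs (Q ! i). j < i" "fletters (Q ! i) \<subseteq> \<Sigma>"
      using frefs_tr[of a0 "P ! i"] fletters_tr[of a0 "P ! i"] a0 by (auto simp: Qi[OF iP])
  qed
  have decQ: "decomposed Q" by (auto simp: decomposed_def Q_def fdec_tr)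
  have langQ: "lang \<Sigma> Q = lang \<Sigma> P"
    unfolding lang_def Q_def using Pne by (simp add: map_butlast[symmetric] last_map holds_tr)
  have "psize Q = sum_list (map (\<lambda>\<phi>. fsize (tr a0 \<phi>)) P)" by (simp add: psize_def Q_def o_def)
  also have "\<dots> \<le> sum_list (map (\<lambda>\<phi>. D ^ Suc d * fsize \<phi>) P)"
  proof (rule sum_list_mono)
    fix \<phi> assume "\<phi> \<in> set P"
    then obtain i where i: "i < length P" "\<phi> = P ! i" by (auto simp: in_set_conv_nth)
    have "fsize (tr a0 \<phi>) \<le> D ^ Suc (dp (take i P) \<phi>) * fsize \<phi>"
      using fsize_tr[OF K2 BK D_def] gi[OF i(1)] cbi[OF i(1)] i(2) by simp
    also have "\<dots> \<le> D ^ Suc d * fsize \<phi>"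
      by (rule mult_le_mono1, rule power_increasing) (use di[OF i(1)] i(2) D1 in auto)
    finally show "fsize (tr a0 \<phi>) \<le> D ^ Suc d * fsize \<phi>" .
  qed
  also have "\<dots> = D ^ Suc d * psize P" by (simp add: psize_def sum_list_const_mult)
  also have "D ^ Suc d = 2 ^ ((2 + (2*p+7)*(g+1))*(d+1))"
  proof -
    have ex: "2*p+7 = 5+(p+1)+(p+1)" by simp
    have e1: "(2::nat)^(2*p+7) = 2^5 * 2^(p+1) * 2^(p+1)" unfolding ex power_add ..
    have e2: "32*K*K = (2::nat) ^ (2*p+7)" unfolding e1 K_def by simp
    have "D = 2^2 * 2^((2*p+7)*(g+1))" unfolding D_def e2 power_mult Suc_eq_plus1 by simp
    also have "\<dots> = 2 ^ (2 + (2*p+7)*(g+1))" by (simp only: power_add)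
    finally have "D = 2 ^ (2 + (2*p+7)*(g+1))" .
    then show ?thesis unfolding Suc_eq_plus1 power_mult by simp
  qed
  also have "2 ^ ((2 + (2*p+7)*(g+1))*(d+1)) * psize P \<le> 20 * psize P * 2 ^ (20 * (p + g + d + 1) ^ 20)"
  proof -
    have "(2::nat) ^ ((2 + (2*p+7)*(g+1))*(d+1)) \<le> 2 ^ (20 * (p + g + d + 1) ^ 20)"
      by (rule power_increasing[OF exp_bound]) simp
    then have "2 ^ ((2 + (2*p+7)*(g+1))*(d+1)) * psize P \<le> 2 ^ (20 * (p + g + d + 1) ^ 20) * psize P"
      by (rule mult_le_mono1)
    also have "\<dots> \<le> 20 * psize P * 2 ^ (20 * (p + g + d + 1) ^ 20)" by simp
    finally show ?thesis .
  qed
  finally have sizeQ: "psize Q \<le> 20 * psize P * 2 ^ (20 * (precision P + girth P + depth P + 1) ^ 20)"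
    by (simp add: p_def g_def d_def)
  have depthQ: "depth Q \<le> 20 * (depth P + 1)"
  proof -
    have "depth Q \<le> d"
      unfolding depth_def
    proof (rule Max.boundedI)
      fix x assume "x \<in> set (0 # map (\<lambda>i. dp (take i Q) (Q ! i)) [0..<length Q])"
      then consider "x = 0" | i where "i < length P" "x = dp (take i Q) (Q ! i)" by (auto simp: lenQ)
      then show "x \<le> d"
      proof cases
        case 2
        have "dp (take i Q) (Q ! i) = dp (map (tr a0) (take i P)) (tr a0 (P ! i))"
          using 2(1) by (simp add: Q_def take_map)
        also have "\<dots> \<le> dp (take i P) (P ! i)" by (rule dp_tr)
        also have "\<dots> \<le> d" by (rule di[OF 2(1)])
        finally show ?thesis using 2(2) by simp
      qed simp
    qed auto
    then show ?thesis by (simp add: d_def)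
  qed
  have precQ: "precision Q \<le> 20 * precision P"
  proof -
    have "Max (set (0 # concat (map fconsts Q))) \<le> Suc B"
    proof (rule Max.boundedI)
      fix x assume "x \<in> set (0 # concat (map fconsts Q))"
      then have "x = 0 \<or> (\<exists>y\<in>set Q. x \<in> set (fconsts y))" by auto
      then consider "x = 0" | i where "i < length P" "x \<in> set (fconsts (Q ! i))"
        by (metis in_set_conv_nth lenQ)
      then show "x \<le> Suc B"
      proof cases
        case 2
        have "cb (Suc B) (tr a0 (P ! i))" by (rule cb_tr[OF cbi[OF 2(1)]])
        then show ?thesis using 2 Qi by (auto simp: cb_def)
      qed simp
    qed auto
    then have "Max (set (0 # concat (map fconsts Q))) < 2 ^ (p + 1)" using BK unfolding K_def by linarith
    then have "precision Q \<le> p + 1" unfolding precision_def by (rule bitlen_le) simp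
    then show ?thesis using p1 by (simp add: p_def)
  qed
  show "\<exists>Q. program \<Sigma> Q \<and> decomposed Q \<and> lang \<Sigma> Q = lang \<Sigma> P
        \<and> psize Q \<le> 20 * psize P * 2 ^ (20 * (precision P + girth P + depth P + 1) ^ 20)
        \<and> depth Q \<le> 20 * (depth P + 1)
        \<and> precision Q \<le> 20 * precision P"
    using progQ decQ langQ sizeQ depthQ precQ by blast
qed

end
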